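(* Let $A$, $B$, $C$ be deterministic parity tree automata over the same finite alphabet with pairwise disjoint state sets, and let $p$ be a state of $C$. If $L(A)\le_W L(B)$, then $L(C_{p:=A})\le_W L(C_{p:=B})$.
   Context: Deterministic parity tree automata have a total transition function $\delta:Q\times\Sigma\to Q\times Q$; a transition $q\xrightarrow{\sigma}q_1,q_2$ has left target $q_1$ (direction 0) and right target $q_2$ (direction 1), written $q\xrightarrow{\sigma,0}q_1$, $q\xrightarrow{\sigma,1}q_2$. For a state $p$ of $C$, $C_{p:=A}$ is the automaton obtained from the disjoint union of $C$ and $A$ by redirecting every transition edge $r\xrightarrow{\sigma,d}p$ of $C$ to $r\xrightarrow{\sigma,d}q_0^A$ (where $q_0^A$ is the initial state of $A$); the initial state is that of $C$ (or $q_0^A$ if $p$ is the initial state of $C$). Acceptance: the highest rank occurring infinitely often on each path of the run is even. $\le_W$ is continuous (Wadge) reducibility. *)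

theory Defs
  imports Main
begin

text \<open>Infinite binary trees: nodes are bool lists (False = direction 0 = left,
  True = direction 1 = right), read from the root.\<close>
type_synonym 'a tree = "bool list \<Rightarrow> 'a"

definition trees :: "'a set \<Rightarrow> 'a tree set" where
  "trees \<Sigma> = {t. \<forall>v. t v \<in> \<Sigma>}"

record ('q, 'a) dpta =
  states :: "'q set"
  init :: 'q
  trans :: "'q \<Rightarrow> 'a \<Rightarrow> 'q \<times> 'q"
  rank :: "'q \<Rightarrow> nat"

definition wf_dpta :: "'a set \<Rightarrow> ('q, 'a) dpta \<Rightarrow> bool" where
  "wf_dpta \<Sigma> A \<longleftrightarrow> finite (states A) \<and> init A \<in> states A \<and>
     (\<forall>q\<in>states A. \<forall>a\<in>\<Sigma>. fst (trans A q a) \<in> states A \<and> snd (trans A q a) \<in> states A)"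

definition dir :: "'q \<times> 'q \<Rightarrow> bool \<Rightarrow> 'q" where
  "dir qq d = (if d then snd qq else fst qq)"

fun run_from :: "('q \<Rightarrow> 'a \<Rightarrow> 'q \<times> 'q) \<Rightarrow> 'q \<Rightarrow> 'a tree \<Rightarrow> bool list \<Rightarrow> 'q" where
  "run_from \<delta> q t [] = q"
| "run_from \<delta> q t (d # v) = run_from \<delta> (dir (\<delta> q (t [])) d) (\<lambda>w. t (d # w)) v"

definition run :: "('q, 'a) dpta \<Rightarrow> 'a tree \<Rightarrow> bool list \<Rightarrow> 'q" where
  "run A t = run_from (trans A) (init A) t"

definition parity_ok :: "(nat \<Rightarrow> nat) \<Rightarrow> bool" where
  "parity_ok s \<longleftrightarrow> (\<exists>m. even m \<and> (\<exists>\<^sub>\<infinity>n. s n = m) \<and> (\<forall>\<^sub>\<infinity>n. s n \<le> m))"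

definition accepts :: "('q, 'a) dpta \<Rightarrow> 'a tree \<Rightarrow> bool" where
  "accepts A t \<longleftrightarrow> (\<forall>\<pi> :: nat \<Rightarrow> bool. parity_ok (\<lambda>n. rank A (run A t (map \<pi> [0..<n]))))"

definition lang :: "'a set \<Rightarrow> ('q, 'a) dpta \<Rightarrow> 'a tree set" where
  "lang \<Sigma> A = {t \<in> trees \<Sigma>. accepts A t}"

definition agree_upto :: "nat \<Rightarrow> 'a tree \<Rightarrow> 'a tree \<Rightarrow> bool" where
  "agree_upto n t t' \<longleftrightarrow> (\<forall>v. length v < n \<longrightarrow> t v = t' v)"

text \<open>Continuity w.r.t. the usual (Cantor-like) topology on trees.\<close>
definition tree_continuous :: "'a set \<Rightarrow> ('a tree \<Rightarrow> 'a tree) \<Rightarrow> bool" where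
  "tree_continuous \<Sigma> f \<longleftrightarrow> (\<forall>t\<in>trees \<Sigma>. \<forall>n. \<exists>m. \<forall>t'\<in>trees \<Sigma>.
      agree_upto m t t' \<longrightarrow> agree_upto n (f t) (f t'))"

definition wadge_le :: "'a set \<Rightarrow> 'a tree set \<Rightarrow> 'a tree set \<Rightarrow> bool" where
  "wadge_le \<Sigma> L M \<longleftrightarrow> (\<exists>f. f ` trees \<Sigma> \<subseteq> trees \<Sigma> \<and> tree_continuous \<Sigma> f \<and>
      (\<forall>t\<in>trees \<Sigma>. t \<in> L \<longleftrightarrow> f t \<in> M))"

text \<open>Substitution C_{p:=A}: disjoint union (state sets assumed disjoint, in a common
  state type), edges of C into p redirected to the initial state of A.\<close>
definition subst :: "('q, 'a) dpta \<Rightarrow> 'q \<Rightarrow> ('q, 'a) dpta \<Rightarrow> ('q, 'a) dpta" where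
  "subst C p A = (let redir = (\<lambda>q. if q = p then init A else q) in
     \<lparr> states = states C \<union> states A,
       init = redir (init C),
       trans = (\<lambda>q a. if q \<in> states A then trans A q a
                      else (redir (fst (trans C q a)), redir (snd (trans C q a)))),
       rank = (\<lambda>q. if q \<in> states A then rank A q else rank C q) \<rparr>)"

end

theory Submission
  imports Defs
begin

definition sub :: "'a tree \<Rightarrow> bool list \<Rightarrow> 'a tree" where
  "sub t u = (\<lambda>w. t (u @ w))"

definition path :: "(nat \<Rightarrow> bool) \<Rightarrow> nat \<Rightarrow> bool list" where
  "path \<pi> n = map \<pi> [0..<n]"

lemma sub_trees: "t \<in> trees \<Sigma> \<Longrightarrow> sub t u \<in> trees \<Sigma>"
  by (simp add: trees_def sub_def)

lemma run_from_append:
  "run_from \<delta> q t (u @ x) = run_from \<delta> (run_from \<delta> q t u) (sub t u) x"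
  by (induction u arbitrary: q t) (simp_all add: sub_def)

lemma run_from_snoc:
  "run_from \<delta> q t (v @ [d]) = dir (\<delta> (run_from \<delta> q t v) (t v)) d"
  by (simp add: run_from_append sub_def)

lemma run_from_local:
  "(\<forall>k<length u. t (take k u) = t' (take k u)) \<Longrightarrow> run_from \<delta> q t u = run_from \<delta> q t' u"
proof (induction u arbitrary: q t t')
  case Nil then show ?case by simp
next
  case (Cons d v)
  have h0: "t [] = t' []" using Cons.prems by (metis length_Cons take_0 zero_less_Suc)
  have "\<forall>k<length v. (\<lambda>w. t (d # w)) (take k v) = (\<lambda>w. t' (d # w)) (take k v)"
  proof (intro allI impI)
    fix k assume "k < length v"
    then have "Suc k < length (d#v)" by simp
    from Cons.prems[rule_format, OF this] show "(\<lambda>w. t (d # w)) (take k v) = (\<lambda>w. t' (d # w)) (take k v)"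
      by simp
  qed
  from Cons.IH[OF this] h0 show ?case by simp
qed

lemma run_from_states:
  assumes "wf_dpta \<Sigma> M"
  shows "q \<in> states M \<Longrightarrow> t \<in> trees \<Sigma> \<Longrightarrow> run_from (trans M) q t u \<in> states M"
proof (induction u arbitrary: q t)
  case Nil then show ?case by simp
next
  case (Cons d v)
  have "t [] \<in> \<Sigma>" using Cons.prems(2) by (simp add: trees_def)
  then have "dir (trans M q (t [])) d \<in> states M" using assms Cons.prems(1)
    by (simp add: wf_dpta_def dir_def)
  moreover have "(\<lambda>w. t (d # w)) \<in> trees \<Sigma>" using Cons.prems(2) by (simp add: trees_def)
  ultimately show ?case using Cons.IH by simp
qed

lemma run_states:
  "wf_dpta \<Sigma> M \<Longrightarrow> t \<in> trees \<Sigma> \<Longrightarrow> run M t u \<in> states M"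
  unfolding run_def by (rule run_from_states) (auto simp: wf_dpta_def)

lemma run_from_cong:
  assumes "\<forall>q\<in>S. \<forall>a\<in>\<Sigma>. \<delta> q a = \<delta>' q a"
    and "\<forall>q\<in>S. \<forall>a\<in>\<Sigma>. fst (\<delta> q a) \<in> S \<and> snd (\<delta> q a) \<in> S"
  shows "q \<in> S \<Longrightarrow> t \<in> trees \<Sigma> \<Longrightarrow> run_from \<delta>' q t u = run_from \<delta> q t u"
proof (induction u arbitrary: q t)
  case Nil then show ?case by simp
next
  case (Cons d v)
  have ts: "t [] \<in> \<Sigma>" using Cons.prems(2) by (simp add: trees_def)
  then have e: "\<delta>' q (t []) = \<delta> q (t [])" using assms(1) Cons.prems(1) by auto
  have "dir (\<delta> q (t [])) d \<in> S" using assms(2) Cons.prems(1) ts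
    by (simp add: dir_def)
  moreover have "(\<lambda>w. t (d # w)) \<in> trees \<Sigma>" using Cons.prems(2) by (simp add: trees_def)
  ultimately show ?case using Cons.IH e by simp
qed

definition pnode :: "('q,'a) dpta \<Rightarrow> 'q \<Rightarrow> 'a tree \<Rightarrow> bool list \<Rightarrow> bool" where
  "pnode C p t u \<longleftrightarrow> run C t u = p \<and> (\<forall>k<length u. run C t (take k u) \<noteq> p)"

lemma exists_pnode:
  assumes "run C t (take k w) = p" shows "\<exists>j\<le>k. pnode C p t (take j w)"
proof -
  define j where "j = (LEAST j. run C t (take j w) = p)"
  have 1: "run C t (take j w) = p" unfolding j_def by (rule LeastI, rule assms)
  have 2: "j \<le> k" unfolding j_def by (rule Least_le, rule assms)
  have "\<forall>i<length (take j w). run C t (take i (take j w)) \<noteq> p"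
  proof (intro allI impI)
    fix i assume "i < length (take j w)"
    then have "i < j" by simp
    then have "run C t (take i w) \<noteq> p" unfolding j_def using not_less_Least by blast
    moreover have "take i (take j w) = take i w" using \<open>i<j\<close> by (simp add: min_def)
    ultimately show "run C t (take i (take j w)) \<noteq> p" by simp
  qed
  then show ?thesis using 1 2 by (auto simp: pnode_def)
qed

lemma take_len_take: "take (length (take k w)) w = take k w"
  by (simp add: min_def)

lemma pnode_lt_False:
  assumes "pnode C p t (take k w)" "pnode C p t (take j w)"
    and "length (take k w) < length (take j w)"
  shows False
proof -
  let ?l = "length (take k w)"
  have "run C t (take ?l (take j w)) \<noteq> p" using assms(2,3) by (simp add: pnode_def)
  moreover have "take ?l (take j w) = take k w"
  proof -
    have "?l < j" using assms(3) by simp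
    then have "take ?l (take j w) = take ?l w" by simp
    then show ?thesis using take_len_take by metis
  qed
  ultimately show False using assms(1) by (simp add: pnode_def)
qed

lemma pnode_unique:
  assumes "pnode C p t (take k w)" "pnode C p t (take j w)"
  shows "take k w = take j w"
proof -
  have "length (take k w) = length (take j w)"
    using pnode_lt_False[OF assms] pnode_lt_False[OF assms(2,1)] by (metis nat_neq_iff)
  then show ?thesis by (metis take_len_take)
qed

definition fmap :: "('q,'a) dpta \<Rightarrow> 'q \<Rightarrow> ('a tree \<Rightarrow> 'a tree) \<Rightarrow> 'a tree \<Rightarrow> 'a tree" where
  "fmap C p g t w = (if \<exists>k. pnode C p t (take k w)
     then g (sub t (take (LEAST k. pnode C p t (take k w)) w)) (drop (LEAST k. pnode C p t (take k w)) w)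
     else t w)"

lemma fmap_pnode:
  assumes "pnode C p t (take k w)"
  shows "fmap C p g t w = g (sub t (take k w)) (drop k w)"
proof -
  let ?k = "LEAST k. pnode C p t (take k w)"
  have "pnode C p t (take ?k w)" by (rule LeastI, rule assms)
  then have e: "take ?k w = take k w" using pnode_unique[OF _ assms] by blast
  have "drop ?k w = drop k w" using e by (metis append_take_drop_id same_append_eq)
  then show ?thesis using assms e unfolding fmap_def by auto
qed

lemma fmap_none:
  "\<not> (\<exists>k. pnode C p t (take k w)) \<Longrightarrow> fmap C p g t w = t w"
  unfolding fmap_def by simp

lemma F3:
  assumes "\<forall>k<length u. run C t (take k u) \<noteq> p"
  shows "run C (fmap C p g t) u = run C t u"
  unfolding run_def
proof (rule run_from_local, intro allI impI)
  fix k assume k: "k < length u"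
  have "\<not> (\<exists>j. pnode C p t (take j (take k u)))"
  proof
    assume "\<exists>j. pnode C p t (take j (take k u))"
    then obtain j where j: "pnode C p t (take j (take k u))" by blast
    have "take j (take k u) = take (min j k) u" by simp
    moreover have "min j k < length u" using k by simp
    ultimately show False using j assms by (auto simp: pnode_def)
  qed
  then show "fmap C p g t (take k u) = t (take k u)" by (rule fmap_none)
qed

lemma F4a:
  assumes "pnode C p t u" shows "pnode C p (fmap C p g t) u"
proof -
  have a: "\<forall>k<length u. run C t (take k u) \<noteq> p" using assms by (simp add: pnode_def)
  have "run C (fmap C p g t) u = p" using F3[OF a] assms by (simp add: pnode_def)
  moreover have "\<forall>k<length u. run C (fmap C p g t) (take k u) \<noteq> p"
  proof (intro allI impI)
    fix k assume k: "k < length u"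
    have "\<forall>i<length (take k u). run C t (take i (take k u)) \<noteq> p"
      using a k by (auto simp: min_def)
    from F3[OF this] show "run C (fmap C p g t) (take k u) \<noteq> p" using a k by simp
  qed
  ultimately show ?thesis by (simp add: pnode_def)
qed

lemma F4:
  "pnode C p (fmap C p g t) u \<longleftrightarrow> pnode C p t u"
proof
  assume h: "pnode C p (fmap C p g t) u"
  have a: "\<forall>k<length u. run C t (take k u) \<noteq> p"
  proof (intro allI impI notI)
    fix k assume k: "k < length u" and e: "run C t (take k u) = p"
    obtain j where j: "j \<le> k" "pnode C p t (take j u)" using exists_pnode[OF e] by blast
    have "pnode C p (fmap C p g t) (take j u)" using F4a[OF j(2)] .
    then have "run C (fmap C p g t) (take j u) = p" by (simp add: pnode_def)
    moreover have "j < length u" using j k by simp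
    ultimately show False using h by (simp add: pnode_def)
  qed
  show "pnode C p t u" using F3[OF a] h a by (simp add: pnode_def)
next
  assume "pnode C p t u" then show "pnode C p (fmap C p g t) u" by (rule F4a)
qed

lemma F5:
  assumes "pnode C p t u" shows "sub (fmap C p g t) u = g (sub t u)"
proof
  fix x
  have "pnode C p t (take (length u) (u @ x))" using assms by simp
  from fmap_pnode[OF this] show "sub (fmap C p g t) u x = g (sub t u) x"
    by (simp add: sub_def)
qed

lemma length_path[simp]: "length (path \<pi> n) = n" by (simp add: path_def)

lemma take_path[simp]: "take k (path \<pi> n) = path \<pi> (min k n)"
  by (simp add: path_def take_map min_def)

lemma path_add: "path \<pi> (k + n) = path \<pi> k @ path (\<lambda>i. \<pi> (i + k)) n"
  by (induction n) (simp_all add: path_def add.commute)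

lemma avoid_iff:
  "(\<forall>n. run C t (path \<pi> n) \<noteq> p) \<longleftrightarrow> (\<forall>n. \<not> pnode C p t (path \<pi> n))"
proof
  assume "\<forall>n. run C t (path \<pi> n) \<noteq> p" then show "\<forall>n. \<not> pnode C p t (path \<pi> n)"
    by (simp add: pnode_def)
next
  assume h: "\<forall>n. \<not> pnode C p t (path \<pi> n)"
  show "\<forall>n. run C t (path \<pi> n) \<noteq> p"
  proof (intro allI notI)
    fix n assume "run C t (path \<pi> n) = p"
    then have "run C t (take n (path \<pi> n)) = p" by simp
    from exists_pnode[OF this] obtain j where "pnode C p t (take j (path \<pi> n))" by blast
    then show False using h by simp
  qed
qed

lemma F6:
  "(\<forall>n. run C (fmap C p g t) (path \<pi> n) \<noteq> p) \<longleftrightarrow> (\<forall>n. run C t (path \<pi> n) \<noteq> p)"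
  by (simp add: avoid_iff F4)

lemma F6eq:
  assumes "\<forall>n. run C t (path \<pi> n) \<noteq> p"
  shows "run C (fmap C p g t) (path \<pi> n) = run C t (path \<pi> n)"
  by (rule F3) (use assms in \<open>auto\<close>)

lemma subst_init: "init (subst C p D) = (if init C = p then init D else init C)"
  by (simp add: subst_def Let_def)
lemma subst_trans: "trans (subst C p D) q a = (if q \<in> states D then trans D q a else
   ((if fst (trans C q a) = p then init D else fst (trans C q a)),
    (if snd (trans C q a) = p then init D else snd (trans C q a))))"
  by (simp add: subst_def Let_def)
lemma subst_rank: "rank (subst C p D) q = (if q \<in> states D then rank D q else rank C q)"
  by (simp add: subst_def Let_def)

lemma S1:
  assumes "wf_dpta \<Sigma> C" "states D \<inter> states C = {}" "t \<in> trees \<Sigma>"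
  shows "(\<forall>k<length w. run C t (take k w) \<noteq> p) \<Longrightarrow>
     run (subst C p D) t w = (if run C t w = p then init D else run C t w)"
proof (induction w rule: rev_induct)
  case Nil then show ?case by (simp add: run_def subst_init)
next
  case (snoc d v)
  have "\<forall>k<length v. run C t (take k v) \<noteq> p" using snoc.prems by auto
  moreover have "run C t v \<noteq> p" using snoc.prems[rule_format, of "length v"] by simp
  ultimately have ih: "run (subst C p D) t v = run C t v" using snoc.IH by simp
  have "run C t v \<in> states C" using run_states assms by blast
  then have nd: "run C t v \<notin> states D" using assms(2) by blast
  have "run (subst C p D) t (v @ [d]) = dir (trans (subst C p D) (run C t v) (t v)) d"
    using ih by (simp add: run_def run_from_snoc)
  moreover have "run C t (v @ [d]) = dir (trans C (run C t v) (t v)) d"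
    by (simp add: run_def run_from_snoc)
  ultimately show ?case using nd by (simp add: subst_trans dir_def)
qed

lemma S2:
  assumes "wf_dpta \<Sigma> C" "states D \<inter> states C = {}" "t \<in> trees \<Sigma>"
    and "\<forall>n. run C t (path \<pi> n) \<noteq> p"
  shows "rank (subst C p D) (run (subst C p D) t (path \<pi> n)) = rank C (run C t (path \<pi> n))"
proof -
  have "\<forall>k<length (path \<pi> n). run C t (take k (path \<pi> n)) \<noteq> p" using assms(4) by simp
  from S1[OF assms(1-3) this] have e: "run (subst C p D) t (path \<pi> n) = run C t (path \<pi> n)"
    using assms(4) by simp
  have "run C t (path \<pi> n) \<in> states C" using run_states assms by blast
  then have "run C t (path \<pi> n) \<notin> states D" using assms(2) by blast
  then show ?thesis using e by (simp add: subst_rank)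
qed

lemma S3:
  assumes "wf_dpta \<Sigma> C" "wf_dpta \<Sigma> D" "states D \<inter> states C = {}" "t \<in> trees \<Sigma>"
    and "pnode C p t (path \<pi> k)"
  shows "rank (subst C p D) (run (subst C p D) t (path \<pi> (k + n)))
       = rank D (run D (sub t (path \<pi> k)) (path (\<lambda>i. \<pi> (i + k)) n))"
proof -
  have "\<forall>j<length (path \<pi> k). run C t (take j (path \<pi> k)) \<noteq> p" using assms(5)
    by (simp add: pnode_def)
  from S1[OF assms(1,3,4) this] have i: "run (subst C p D) t (path \<pi> k) = init D"
    using assms(5) by (simp add: pnode_def)
  have c: "run_from (trans (subst C p D)) (init D) s x = run_from (trans D) (init D) s x"
    if "s \<in> trees \<Sigma>" for s x
    by (rule run_from_cong[where S="states D" and \<Sigma>=\<Sigma>])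
      (use assms(2) that in \<open>auto simp: subst_trans wf_dpta_def\<close>)
  have "run (subst C p D) t (path \<pi> (k + n)) = run D (sub t (path \<pi> k)) (path (\<lambda>i. \<pi> (i + k)) n)"
    using i c[OF sub_trees[OF assms(4)]] by (simp add: run_def path_add run_from_append)
  moreover have "run D (sub t (path \<pi> k)) (path (\<lambda>i. \<pi> (i + k)) n) \<in> states D"
    using run_states[OF assms(2) sub_trees[OF assms(4)]] .
  ultimately show ?thesis by (simp add: subst_rank)
qed

lemma parity_shift: "parity_ok (\<lambda>n. s (k + n)) \<longleftrightarrow> parity_ok s"
proof -
  have a: "(\<exists>\<^sub>\<infinity>n. P (k + n)) \<longleftrightarrow> (\<exists>\<^sub>\<infinity>n. P n)" for P :: "nat \<Rightarrow> bool"
    using eventually_sequentially_seg[of "\<lambda>n. \<not> P n" k]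
    by (simp add: frequently_def cofinite_eq_sequentially add.commute)
  have b: "(\<forall>\<^sub>\<infinity>n. P (k + n)) \<longleftrightarrow> (\<forall>\<^sub>\<infinity>n. P n)" for P :: "nat \<Rightarrow> bool"
    using eventually_sequentially_seg[of P k]
    by (simp add: cofinite_eq_sequentially add.commute)
  have a': "(\<exists>\<^sub>\<infinity>n. s (k + n) = m) \<longleftrightarrow> (\<exists>\<^sub>\<infinity>n. s n = m)" for m
    using a[of "\<lambda>n. s n = m"] by simp
  have b': "(\<forall>\<^sub>\<infinity>n. s (k + n) \<le> m) \<longleftrightarrow> (\<forall>\<^sub>\<infinity>n. s n \<le> m)" for m
    using b[of "\<lambda>n. s n \<le> m"] by simp
  show ?thesis unfolding parity_ok_def using a' b' by simp
qed

lemma accepts_path: "accepts M t \<longleftrightarrow> (\<forall>\<pi>. parity_ok (\<lambda>n. rank M (run M t (path \<pi> n))))"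
  by (simp add: accepts_def path_def)

lemma ACC:
  assumes "wf_dpta \<Sigma> C" "wf_dpta \<Sigma> D" "states D \<inter> states C = {}" "t \<in> trees \<Sigma>"
  shows "accepts (subst C p D) t \<longleftrightarrow>
    (\<forall>\<pi>. (\<forall>n. run C t (path \<pi> n) \<noteq> p) \<longrightarrow> parity_ok (\<lambda>n. rank C (run C t (path \<pi> n)))) \<and>
    (\<forall>u. pnode C p t u \<longrightarrow> accepts D (sub t u))"
proof
  assume acc: "accepts (subst C p D) t"
  have P1: "\<forall>\<pi>. (\<forall>n. run C t (path \<pi> n) \<noteq> p) \<longrightarrow> parity_ok (\<lambda>n. rank C (run C t (path \<pi> n)))"
  proof (intro allI impI)
    fix \<pi> assume h: "\<forall>n. run C t (path \<pi> n) \<noteq> p"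
    have "parity_ok (\<lambda>n. rank (subst C p D) (run (subst C p D) t (path \<pi> n)))"
      using acc by (simp add: accepts_path)
    then show "parity_ok (\<lambda>n. rank C (run C t (path \<pi> n)))"
      using S2[OF assms(1,3,4) h] by simp
  qed
  have P2: "\<forall>u. pnode C p t u \<longrightarrow> accepts D (sub t u)"
  proof (intro allI impI)
    fix u assume pu: "pnode C p t u"
    show "accepts D (sub t u)" unfolding accepts_path
    proof
      fix \<pi>' :: "nat \<Rightarrow> bool"
      define \<pi> where "\<pi> = (\<lambda>i. if i < length u then u ! i else \<pi>' (i - length u))"
      have pe: "path \<pi> (length u) = u"
        by (rule nth_equalityI) (simp_all add: path_def \<pi>_def)
      have se: "(\<lambda>i. \<pi> (i + length u)) = \<pi>'" by (simp add: \<pi>_def)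
      have pn: "pnode C p t (path \<pi> (length u))" using pu pe by simp
      have "parity_ok (\<lambda>n. rank (subst C p D) (run (subst C p D) t (path \<pi> n)))"
        using acc by (simp add: accepts_path)
      then have "parity_ok (\<lambda>n. rank (subst C p D) (run (subst C p D) t (path \<pi> (length u + n))))"
        using parity_shift[of "\<lambda>n. rank (subst C p D) (run (subst C p D) t (path \<pi> n))" "length u"]
        by simp
      then show "parity_ok (\<lambda>n. rank D (run D (sub t u) (path \<pi>' n)))"
        using S3[OF assms pn] pe se by simp
    qed
  qed
  show "(\<forall>\<pi>. (\<forall>n. run C t (path \<pi> n) \<noteq> p) \<longrightarrow> parity_ok (\<lambda>n. rank C (run C t (path \<pi> n)))) \<and>
    (\<forall>u. pnode C p t u \<longrightarrow> accepts D (sub t u))" using P1 P2 by blast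
next
  assume h: "(\<forall>\<pi>. (\<forall>n. run C t (path \<pi> n) \<noteq> p) \<longrightarrow> parity_ok (\<lambda>n. rank C (run C t (path \<pi> n)))) \<and>
    (\<forall>u. pnode C p t u \<longrightarrow> accepts D (sub t u))"
  show "accepts (subst C p D) t" unfolding accepts_path
  proof
    fix \<pi>
    show "parity_ok (\<lambda>n. rank (subst C p D) (run (subst C p D) t (path \<pi> n)))"
    proof (cases "\<forall>n. run C t (path \<pi> n) \<noteq> p")
      case True
      then show ?thesis using h S2[OF assms(1,3,4) True] by simp
    next
      case False
      then obtain n where "run C t (take n (path \<pi> n)) = p" by auto
      from exists_pnode[OF this] obtain j where "j \<le> n" "pnode C p t (take j (path \<pi> n))" by blast
      then have pj: "pnode C p t (path \<pi> j)" by (simp add: min_def)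
      then have "accepts D (sub t (path \<pi> j))" using h by blast
      then have "parity_ok (\<lambda>n. rank D (run D (sub t (path \<pi> j)) (path (\<lambda>i. \<pi> (i + j)) n)))"
        by (simp add: accepts_path)
      then have "parity_ok (\<lambda>n. rank (subst C p D) (run (subst C p D) t (path \<pi> (j + n))))"
        using S3[OF assms pj] by simp
      then show ?thesis
        using parity_shift[of "\<lambda>n. rank (subst C p D) (run (subst C p D) t (path \<pi> n))" j] by simp
    qed
  qed
qed

lemma run_agree:
  assumes "agree_upto m t t'" "length u \<le> m"
  shows "run C t u = run C t' u"
  unfolding run_def by (rule run_from_local) (use assms in \<open>auto simp: agree_upto_def\<close>)

lemma pnode_agree:
  assumes "agree_upto m t t'" "length u \<le> m"
  shows "pnode C p t u \<longleftrightarrow> pnode C p t' u"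
proof -
  have "run C t u = run C t' u" using run_agree assms by blast
  moreover have "\<forall>k<length u. run C t (take k u) = run C t' (take k u)"
    using assms by (auto intro!: run_agree)
  ultimately show ?thesis by (simp add: pnode_def)
qed

theorem lemma5p5:
  fixes \<Sigma> :: "'a set" and A B C :: "('q, 'a) dpta" and p :: 'q
  assumes "finite \<Sigma>"
    and "wf_dpta \<Sigma> A" and "wf_dpta \<Sigma> B" and "wf_dpta \<Sigma> C"
    and "states A \<inter> states B = {}" and "states A \<inter> states C = {}"
    and "states B \<inter> states C = {}"
    and "p \<in> states C"
    and "wadge_le \<Sigma> (lang \<Sigma> A) (lang \<Sigma> B)"
  shows "wadge_le \<Sigma> (lang \<Sigma> (subst C p A)) (lang \<Sigma> (subst C p B))"
proof -
  obtain g where g1: "g ` trees \<Sigma> \<subseteq> trees \<Sigma>" and g2: "tree_continuous \<Sigma> g"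
    and g3: "\<forall>s\<in>trees \<Sigma>. s \<in> lang \<Sigma> A \<longleftrightarrow> g s \<in> lang \<Sigma> B"
    using assms(9) unfolding wadge_le_def by blast
  have gacc: "accepts B (g s) \<longleftrightarrow> accepts A s" if "s \<in> trees \<Sigma>" for s
    using g1 g3 that by (auto simp: lang_def)
  define f where "f = fmap C p g"
  have ft: "f t \<in> trees \<Sigma>" if t: "t \<in> trees \<Sigma>" for t
    unfolding trees_def mem_Collect_eq
  proof
    fix w
    show "f t w \<in> \<Sigma>"
    proof (cases "\<exists>k. pnode C p t (take k w)")
      case True
      then obtain k where "pnode C p t (take k w)" by blast
      then have "f t w = g (sub t (take k w)) (drop k w)" by (simp add: f_def fmap_pnode)
      moreover have "g (sub t (take k w)) \<in> trees \<Sigma>" using g1 sub_trees[OF t] by blast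
      ultimately show ?thesis by (simp add: trees_def)
    next
      case False
      then show ?thesis using t by (simp add: f_def fmap_none trees_def)
    qed
  qed
  have cont: "tree_continuous \<Sigma> f"
    unfolding tree_continuous_def
  proof (intro ballI allI)
    fix t n assume t: "t \<in> trees \<Sigma>"
    have "\<forall>u. \<exists>m. \<forall>s\<in>trees \<Sigma>. agree_upto m (sub t u) s \<longrightarrow> agree_upto n (g (sub t u)) (g s)"
      using g2 sub_trees[OF t] unfolding tree_continuous_def by blast
    then obtain M where M: "\<And>u. \<forall>s\<in>trees \<Sigma>. agree_upto (M u) (sub t u) s \<longrightarrow> agree_upto n (g (sub t u)) (g s)"
      by metis
    define U where "U = {u :: bool list. set u \<subseteq> UNIV \<and> length u \<le> n}"
    have fU: "finite U" unfolding U_def by (rule finite_lists_length_le) simp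
    define m where "m = n + (\<Sum>u\<in>U. M u)"
    have Mle: "M u \<le> m - n" if "u \<in> U" for u
      unfolding m_def using member_le_sum[OF that _ fU, of M] by simp
    show "\<exists>m. \<forall>t'\<in>trees \<Sigma>. agree_upto m t t' \<longrightarrow> agree_upto n (f t) (f t')"
    proof (intro exI ballI impI)
      fix t' assume t': "t' \<in> trees \<Sigma>" and ag: "agree_upto m t t'"
      show "agree_upto n (f t) (f t')" unfolding agree_upto_def
      proof (intro allI impI)
        fix w :: "bool list" assume w: "length w < n"
        have nm: "n \<le> m" by (simp add: m_def)
        have pe: "pnode C p t (take k w) \<longleftrightarrow> pnode C p t' (take k w)" for k
          by (rule pnode_agree[OF ag]) (use w nm in simp)
        show "f t w = f t' w"
        proof (cases "\<exists>k. pnode C p t (take k w)")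
          case True
          then obtain k where k: "pnode C p t (take k w)" by blast
          let ?u = "take k w"
          have k': "pnode C p t' ?u" using k pe by blast
          have uU: "?u \<in> U" using w by (simp add: U_def)
          have "agree_upto (M ?u) (sub t ?u) (sub t' ?u)"
            unfolding agree_upto_def sub_def
          proof (intro allI impI)
            fix x :: "bool list" assume "length x < M ?u"
            then have "length (?u @ x) < m" using Mle[OF uU] w nm by simp
            then show "t (?u @ x) = t' (?u @ x)" using ag by (simp add: agree_upto_def)
          qed
          then have "agree_upto n (g (sub t ?u)) (g (sub t' ?u))"
            using M sub_trees[OF t'] by blast
          then have "g (sub t ?u) (drop k w) = g (sub t' ?u) (drop k w)"
            using w by (simp add: agree_upto_def)
          then show ?thesis using k k' by (simp add: f_def fmap_pnode)
        next
          case False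
          then have "\<not> (\<exists>k. pnode C p t' (take k w))" using pe by blast
          then show ?thesis using False ag w nm by (simp add: f_def fmap_none agree_upto_def)
        qed
      qed
    qed
  qed
  have eqv: "t \<in> lang \<Sigma> (subst C p A) \<longleftrightarrow> f t \<in> lang \<Sigma> (subst C p B)" if t: "t \<in> trees \<Sigma>" for t
  proof -
    have dA: "states A \<inter> states C = {}" and dB: "states B \<inter> states C = {}" using assms by auto
    have "t \<in> lang \<Sigma> (subst C p A) \<longleftrightarrow> accepts (subst C p A) t" using t by (simp add: lang_def)
    also have "\<dots> \<longleftrightarrow> (\<forall>\<pi>. (\<forall>n. run C t (path \<pi> n) \<noteq> p) \<longrightarrow> parity_ok (\<lambda>n. rank C (run C t (path \<pi> n)))) \<and>
      (\<forall>u. pnode C p t u \<longrightarrow> accepts A (sub t u))" by (rule ACC[OF assms(4,2) dA t])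
    also have "\<dots> \<longleftrightarrow> (\<forall>\<pi>. (\<forall>n. run C (f t) (path \<pi> n) \<noteq> p) \<longrightarrow> parity_ok (\<lambda>n. rank C (run C (f t) (path \<pi> n)))) \<and>
      (\<forall>u. pnode C p (f t) u \<longrightarrow> accepts B (sub (f t) u))"
    proof -
      have 1: "((\<forall>n. run C (f t) (path \<pi> n) \<noteq> p) \<longrightarrow> parity_ok (\<lambda>n. rank C (run C (f t) (path \<pi> n))))
         \<longleftrightarrow> ((\<forall>n. run C t (path \<pi> n) \<noteq> p) \<longrightarrow> parity_ok (\<lambda>n. rank C (run C t (path \<pi> n))))" for \<pi>
        unfolding f_def using F6[of C p g t \<pi>] F6eq[of C t \<pi> p g] by auto
      have 2: "(pnode C p (f t) u \<longrightarrow> accepts B (sub (f t) u)) \<longleftrightarrow> (pnode C p t u \<longrightarrow> accepts A (sub t u))" for u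
        unfolding f_def using F4[of C p g t u] F5[of C p t u g] gacc[OF sub_trees[OF t]] by auto
      show ?thesis using 1 2 by blast
    qed
    also have "\<dots> \<longleftrightarrow> accepts (subst C p B) (f t)" by (rule ACC[OF assms(4,3) dB ft[OF t], symmetric])
    also have "\<dots> \<longleftrightarrow> f t \<in> lang \<Sigma> (subst C p B)" using ft[OF t] by (simp add: lang_def)
    finally show ?thesis .
  qed
  show ?thesis unfolding wadge_le_def using ft cont eqv by blast
qed

end
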